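(* (Stable Local Attractor.) Let $z^*\in\bigcap_{t=1}^M F(\mathcal{T}_t)$ and let $r=\min\{r_t: t\in\{1,\dots,M\}\}$, where $r_t=\min\{d_{sep}(z^*,C_t),\ d_{esc}(z^*,C_t)\}$ (alternatively, $r_t$ may be taken as: $\min\{d_{sep}(z^*,C_t),\ \tfrac{d_{sep}(z^*,C_t)+d_{esc}(z^*,C_t)}{2}\}$ if $|K_t(z^* )|=1$, and $\min\{g(x_i^*,x_j^*,w_i,w_j),\,g(y_i^*,y_j^*,h_i,h_j)\}$ if $|K_t(z^* )|=2$, where $C_t=C_{i,j}$, $z^*=(x^*,y^* )$ and $g(a,b,c,d)=|(a-b)+(c-d)/2|/\sqrt{2}$), and assume $r>0$. Let $\epsilon\in(0,r)$ be arbitrary and let $(z^n)_{n\ge0}$ be a sequential MAP trajectory. If $z^{n_0}\in B(z^*,\epsilon)$ for some $n_0$, then $z^n\in B(z^*,\epsilon)$ for all $n\ge n_0$, and $(z^n)$ converges to some common fixed point $\tilde z^*\in\bigcap_{t=1}^M F(\mathcal{T}_t)$.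
   Context: Fix reals $W,H>0$, integers $N\ge N_m\ge 2$, and widths $w_i>0$, heights $h_i>0$ for $1\le i\le N_m$. Points of $\mathbb{R}^{2N}$ are written $z=(x,y)$ with $x=(x_1,\dots,x_N)$, $y=(y_1,\dots,y_N)$. For $1\le i\le N_m$ let $B_i^x=\{z: 0\le x_i\le W-w_i\}$, $B_i^y=\{z: 0\le y_i\le H-h_i\}$; for $i\neq j$ let $B_{i,j}=B_i^x\cap B_i^y\cap B_j^x\cap B_j^y$, $O^x_{i,j}=\{z: x_i+w_i\le x_j\}$, $O^y_{i,j}=\{z: y_i+h_i\le y_j\}$. Define the closed convex sets $C_{i,j,\mathsf{L}}=O^x_{i,j}\cap B_{i,j}$, $C_{i,j,\mathsf{R}}=O^x_{j,i}\cap B_{i,j}$, $C_{i,j,\mathsf{B}}=O^y_{i,j}\cap B_{i,j}$, $C_{i,j,\mathsf{A}}=O^y_{j,i}\cap B_{i,j}$ (assumed nonempty) and $C_{i,j}=C_{i,j,\mathsf{L}}\cup C_{i,j,\mathsf{R}}\cup C_{i,j,\mathsf{B}}\cup C_{i,j,\mathsf{A}}$. Enumerate the pairs $1\le i<j\le N_m$ by $t=1,\dots,M$ and write $C_t=C_{i,j}$, $C_{t,k}=C_{i,j,k}$ for $k\in\{\mathsf{L},\mathsf{R},\mathsf{B},\mathsf{A}\}$. With $\|\cdot\|$ the Euclidean norm and $\mathrm{d}(z,C)=\inf_{c\in C}\|z-c\|$: $\mathcal{P}_t(z)=\{c\in C_t:\|z-c\|=\mathrm{d}(z,C_t)\}$,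 $P_{t,k}(z)$ is the unique nearest point of $C_{t,k}$ to $z$; for a fixed relaxation parameter $\lambda\in(0,2)$, $\mathcal{T}_t(z)=\{z+\lambda(p-z):p\in\mathcal{P}_t(z)\}$ and $F(\mathcal{T}_t)=\{z: z\in\mathcal{T}_t(z)\}$. Active indices: $K_t(z)=\{k: P_{t,k}(z)\in\mathcal{P}_t(z)\}$. $d_{esc}(z^*,C_t)=\inf\{\|z-z^*\| : z\notin C_{t,k}\text{ for some }k\in K_t(z^* )\}$; $d_{sep}(z^*,C_t)=\min\{\mathrm{d}(z^*,C_{t,k}) : k\notin K_t(z^* )\}$. $B(z,r)$ is the open Euclidean ball. A sequential MAP trajectory is a sequence with $z^{n+1}\in\mathcal{T}_{t_n}(z^n)$ for all $n\ge0$, where $t_n\in\{1,\dots,M\}$ and each sweep $\{t_{kM+1},\dots,t_{(k+1)M}\}$ equals $\{1,\dots,M\}$. *)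

theory Defs
  imports "HOL-Analysis.Analysis"
begin

text \<open>Points z = (x,y) of R^(2N): x, y are real vectors indexed by the finite type 'n
  (N = CARD('n)).  The product norm is the Euclidean norm of R^(2N).\<close>

type_synonym 'n pt = "(real^'n) \<times> (real^'n)"

datatype side = Lft | Rgt | Blw | Abv

lemma UNIV_side: "(UNIV :: side set) = {Lft, Rgt, Blw, Abv}"
  using side.exhaust by auto

instance side :: finite
  by standard (simp add: UNIV_side)

definition Bx :: "real \<Rightarrow> ('n::finite \<Rightarrow> real) \<Rightarrow> 'n \<Rightarrow> 'n pt set" where
  "Bx W w i = {z. 0 \<le> fst z $ i \<and> fst z $ i \<le> W - w i}"

definition By :: "real \<Rightarrow> ('n::finite \<Rightarrow> real) \<Rightarrow> 'n \<Rightarrow> 'n pt set" where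
  "By H h i = {z. 0 \<le> snd z $ i \<and> snd z $ i \<le> H - h i}"

definition Bij :: "real \<Rightarrow> real \<Rightarrow> ('n::finite \<Rightarrow> real) \<Rightarrow> ('n \<Rightarrow> real) \<Rightarrow> 'n \<Rightarrow> 'n \<Rightarrow> 'n pt set" where
  "Bij W H w h i j = Bx W w i \<inter> By H h i \<inter> Bx W w j \<inter> By H h j"

definition Ox :: "('n::finite \<Rightarrow> real) \<Rightarrow> 'n \<Rightarrow> 'n \<Rightarrow> 'n pt set" where
  "Ox w i j = {z. fst z $ i + w i \<le> fst z $ j}"

definition Oy :: "('n::finite \<Rightarrow> real) \<Rightarrow> 'n \<Rightarrow> 'n \<Rightarrow> 'n pt set" where
  "Oy h i j = {z. snd z $ i + h i \<le> snd z $ j}"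

definition Cpiece :: "real \<Rightarrow> real \<Rightarrow> ('n::finite \<Rightarrow> real) \<Rightarrow> ('n \<Rightarrow> real) \<Rightarrow> 'n \<Rightarrow> 'n \<Rightarrow> side \<Rightarrow> 'n pt set" where
  "Cpiece W H w h i j k =
     (case k of Lft \<Rightarrow> Ox w i j | Rgt \<Rightarrow> Ox w j i | Blw \<Rightarrow> Oy h i j | Abv \<Rightarrow> Oy h j i)
     \<inter> Bij W H w h i j"

text \<open>Pairs i<j of rectangle indices (rectangles indexed by the set Rs, |Rs| = N_m).\<close>
definition pairs :: "'n::linorder set \<Rightarrow> ('n \<times> 'n) set" where
  "pairs Rs = {(i, j). i \<in> Rs \<and> j \<in> Rs \<and> i < j}"

definition Cfam :: "real \<Rightarrow> real \<Rightarrow> ('n::{finite,linorder} \<Rightarrow> real) \<Rightarrow> ('n \<Rightarrow> real) \<Rightarrow> ('n \<times> 'n) \<Rightarrow> side \<Rightarrow> 'n pt set" where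
  "Cfam W H w h t = Cpiece W H w h (fst t) (snd t)"

definition unionC :: "(side \<Rightarrow> 'a set) \<Rightarrow> 'a set" where
  "unionC C = (\<Union>k. C k)"

definition nearest :: "(side \<Rightarrow> 'a::metric_space set) \<Rightarrow> 'a \<Rightarrow> 'a set" where
  "nearest C z = {c \<in> unionC C. dist z c = infdist z (unionC C)}"

definition Top :: "real \<Rightarrow> (side \<Rightarrow> 'a::real_normed_vector set) \<Rightarrow> 'a \<Rightarrow> 'a set" where
  "Top lam C z = {z + lam *\<^sub>R (p - z) | p. p \<in> nearest C z}"

definition FixT :: "real \<Rightarrow> (side \<Rightarrow> 'a::real_normed_vector set) \<Rightarrow> 'a set" where
  "FixT lam C = {z. z \<in> Top lam C z}"

definition active :: "(side \<Rightarrow> 'a::{real_inner,heine_borel} set) \<Rightarrow> 'a \<Rightarrow> side set" where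
  "active C z = {k. closest_point (C k) z \<in> nearest C z}"

definition d_esc :: "(side \<Rightarrow> 'a::{real_inner,heine_borel} set) \<Rightarrow> 'a \<Rightarrow> real" where
  "d_esc C zs = Inf {norm (z - zs) | z. \<exists>k \<in> active C zs. z \<notin> C k}"

definition d_sep :: "(side \<Rightarrow> 'a::{real_inner,heine_borel} set) \<Rightarrow> 'a \<Rightarrow> real" where
  "d_sep C zs = Min ((\<lambda>k. infdist zs (C k)) ` {k. k \<notin> active C zs})"

definition gfun :: "real \<Rightarrow> real \<Rightarrow> real \<Rightarrow> real \<Rightarrow> real" where
  "gfun a b c d = \<bar>(a - b) + (c - d) / 2\<bar> / sqrt 2"

end

theory Submission
  imports Defs
begin


lemma convex_Bx: "convex (Bx W w i)"
  unfolding Bx_def convex_def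
  by (auto intro!: add_nonneg_nonneg mult_nonneg_nonneg convex_bound_le)
lemma convex_By: "convex (By H h i)"
  unfolding By_def convex_def
  by (auto intro!: add_nonneg_nonneg mult_nonneg_nonneg convex_bound_le)
lemma convex_Ox: "convex (Ox w i j)"
  unfolding convex_def
proof (intro ballI allI impI)
  fix a b :: "'a pt" and u v :: real
  assume a: "a \<in> Ox w i j" and b: "b \<in> Ox w i j" and uv: "0 \<le> u" "0 \<le> v" "u + v = 1"
  have 1: "u * (fst a $ i + w i) \<le> u * fst a $ j" by (rule mult_left_mono) (use a uv in \<open>auto simp: Ox_def\<close>)
  have 2: "v * (fst b $ i + w i) \<le> v * fst b $ j" by (rule mult_left_mono) (use b uv in \<open>auto simp: Ox_def\<close>)
  have 3: "u * w i + v * w i = w i" using uv(3) by (metis distrib_right mult_1)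
  show "u *\<^sub>R a + v *\<^sub>R b \<in> Ox w i j" using 1 2 3 by (simp add: Ox_def distrib_left)
qed
lemma convex_Oy: "convex (Oy h i j)"
  unfolding convex_def
proof (intro ballI allI impI)
  fix a b :: "'a pt" and u v :: real
  assume a: "a \<in> Oy h i j" and b: "b \<in> Oy h i j" and uv: "0 \<le> u" "0 \<le> v" "u + v = 1"
  have 1: "u * (snd a $ i + h i) \<le> u * snd a $ j" by (rule mult_left_mono) (use a uv in \<open>auto simp: Oy_def\<close>)
  have 2: "v * (snd b $ i + h i) \<le> v * snd b $ j" by (rule mult_left_mono) (use b uv in \<open>auto simp: Oy_def\<close>)
  have 3: "u * h i + v * h i = h i" using uv(3) by (metis distrib_right mult_1)
  show "u *\<^sub>R a + v *\<^sub>R b \<in> Oy h i j" using 1 2 3 by (simp add: Oy_def distrib_left)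
qed
lemma closed_Bx: "closed (Bx W w i)"
  unfolding Bx_def by (intro closed_Collect_conj closed_Collect_le continuous_intros)
lemma closed_By: "closed (By H h i)"
  unfolding By_def by (intro closed_Collect_conj closed_Collect_le continuous_intros)
lemma closed_Ox: "closed (Ox w i j)"
  unfolding Ox_def by (intro closed_Collect_conj closed_Collect_le continuous_intros)
lemma closed_Oy: "closed (Oy h i j)"
  unfolding Oy_def by (intro closed_Collect_conj closed_Collect_le continuous_intros)

lemma convex_Cfam: "convex (Cfam W H w h t k)"
  unfolding Cfam_def Cpiece_def Bij_def
  by (cases k) (auto intro!: convex_Int convex_Bx convex_By convex_Ox convex_Oy)
lemma closed_Cfam: "closed (Cfam W H w h t k)"
  unfolding Cfam_def Cpiece_def Bij_def
  by (cases k) (auto intro!: closed_Int closed_Bx closed_By closed_Ox closed_Oy)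
lemma closed_unionC: "closed (unionC (Cfam W H w h t))"
  unfolding unionC_def by (intro closed_Union) (auto simp: closed_Cfam)



lemma seg:
  fixes \<phi> :: "'a::real_inner \<Rightarrow> real"
  assumes lin: "linear \<phi>" and bnd: "\<And>u. (\<phi> u)\<^sup>2 \<le> 2 * (norm u)\<^sup>2"
    and cvx: "convex B" and zs: "zs \<in> B" "\<alpha> \<le> \<phi> zs" and q: "q \<in> B" "\<phi> q \<le> \<beta>"
    and ab: "\<beta> < \<alpha>"
    and e: "norm (z - zs) * sqrt 2 < \<phi> zs - (\<alpha> + \<beta>) / 2"
  shows "\<exists>q'. q' \<in> B \<and> \<alpha> \<le> \<phi> q' \<and> dist z q' < dist z q"
proof -
  define v where "v = q - zs"
  define D where "D = \<phi> zs - \<phi> q"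
  have Dpos: "D > 0" using zs q ab by (simp add: D_def)
  have phiv: "\<phi> v = - D" by (simp add: v_def D_def linear_diff[OF lin])
  define th where "th = (\<phi> zs - \<alpha>) / D"
  have th0: "0 \<le> th" using zs Dpos by (simp add: th_def)
  have th1: "th < 1" using Dpos q ab by (simp add: th_def D_def)
  define q' where "q' = zs + th *\<^sub>R v"
  have q'eq: "q' = (1 - th) *\<^sub>R zs + th *\<^sub>R q"
    by (simp add: q'_def v_def algebra_simps)
  have q'B: "q' \<in> B" unfolding q'eq
    using cvx zs(1) q(1) th0 th1 by (intro convexD) auto
  have "\<phi> q' = \<phi> zs + th * \<phi> v"
    by (simp add: q'_def linear_add[OF lin] linear_scale[OF lin])
  also have "\<dots> = \<alpha>" using Dpos by (simp add: phiv th_def)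
  finally have phiq': "\<alpha> \<le> \<phi> q'" by simp
  define e where "e = z - zs"
  have "\<bar>\<phi> v\<bar> \<le> sqrt 2 * norm v"
    by (rule power2_le_imp_le) (use bnd[of v] in \<open>auto simp: power_mult_distrib\<close>)
  hence Dle: "D \<le> sqrt 2 * norm v" using phiv by simp
  have "\<phi> zs - (\<alpha> + \<beta>) / 2 \<le> D * (1 + th) / 2"
  proof -
    have eq: "D * (1 + th) / 2 = (D + (\<phi> zs - \<alpha>)) / 2" using Dpos by (simp add: th_def distrib_left)
    show ?thesis unfolding eq using q(2) unfolding D_def by (simp add: field_simps)
  qed
  also have "\<dots> \<le> sqrt 2 * norm v * (1 + th) / 2"
    using Dle th0 by (intro divide_right_mono mult_right_mono) auto
  finally have "\<phi> zs - (\<alpha> + \<beta>) / 2 \<le> sqrt 2 * norm v * (1 + th) / 2" .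
  with e have "norm e * sqrt 2 < sqrt 2 * norm v * (1 + th) / 2" unfolding e_def by linarith
  hence "sqrt 2 * (2 * norm e) < sqrt 2 * ((1 + th) * norm v)" by (simp add: field_simps)
  hence ne: "2 * norm e < (1 + th) * norm v" by simp
  have "0 < (1 + th) * norm v" using ne norm_ge_zero[of e] by linarith
  hence vpos: "norm v > 0" using th0 by (simp add: zero_less_mult_iff)
  have ev: "inner e v \<le> norm e * norm v" by (rule norm_cauchy_schwarz)
  have key: "2 * inner e v < (1 + th) * (norm v)\<^sup>2"
  proof -
    have "2 * inner e v \<le> 2 * norm e * norm v" using ev by simp
    also have "\<dots> < (1 + th) * norm v * norm v"
      using ne vpos by (intro mult_strict_right_mono) auto
    finally show ?thesis by (simp add: power2_eq_square mult.assoc)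
  qed
  have zq': "z - q' = e - th *\<^sub>R v" by (simp add: e_def q'_def)
  have zq: "z - q = e - v" by (simp add: e_def v_def)
  have "(norm (e - th *\<^sub>R v))\<^sup>2 = (norm e)\<^sup>2 - 2 * th * inner e v + th\<^sup>2 * (norm v)\<^sup>2"
    unfolding power2_norm_eq_inner by (simp add: inner_diff_left inner_diff_right inner_commute power2_eq_square algebra_simps)
  moreover have "(norm (e - v))\<^sup>2 = (norm e)\<^sup>2 - 2 * inner e v + (norm v)\<^sup>2"
    unfolding power2_norm_eq_inner by (simp add: inner_diff_left inner_diff_right inner_commute algebra_simps)
  moreover have "(1 - th) * (2 * inner e v) < (1 - th) * ((1 + th) * (norm v)\<^sup>2)"
    using key th1 by (intro mult_strict_left_mono) auto
  moreover have "(1 - th) * (2 * inner e v) = 2 * inner e v - 2 * th * inner e v"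
    by (simp add: algebra_simps)
  moreover have "(1 - th) * ((1 + th) * (norm v)\<^sup>2) = (norm v)\<^sup>2 - th\<^sup>2 * (norm v)\<^sup>2"
    by (simp add: algebra_simps power2_eq_square)
  ultimately have "(norm (e - th *\<^sub>R v))\<^sup>2 < (norm (e - v))\<^sup>2"
    by linarith
  hence "norm (e - th *\<^sub>R v) < norm (e - v)"
    by (rule power_less_imp_less_base) simp
  hence "dist z q' < dist z q" by (simp add: dist_norm zq' zq)
  thus ?thesis using q'B phiq' by blast
qed



lemma relax_step:
  fixes z p c :: "'a::real_inner"
  assumes dot: "inner (z - p) (c - p) \<le> 0" and lam: "0 \<le> lam"
  shows "(norm (z + lam *\<^sub>R (p - z) - c))\<^sup>2 \<le> (norm (z - c))\<^sup>2 - lam * (2 - lam) * (norm (p - z))\<^sup>2"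
proof -
  have h1: "inner (z - c) (p - z) = - inner (p - z) (p - z) + inner (z - p) (c - p)"
    by (simp add: inner_diff_left inner_diff_right inner_commute algebra_simps)
  have eq: "z + lam *\<^sub>R (p - z) - c = (z - c) + lam *\<^sub>R (p - z)" by (simp add: algebra_simps)
  have h2: "(norm (z + lam *\<^sub>R (p - z) - c))\<^sup>2 = inner (z - c) (z - c) + 2 * lam * inner (z - c) (p - z) + lam\<^sup>2 * inner (p - z) (p - z)"
    unfolding eq power2_norm_eq_inner by (simp add: inner_add_left inner_add_right inner_commute power2_eq_square algebra_simps)
  have h3: "lam * inner (z - c) (p - z) \<le> lam * (- inner (p - z) (p - z))"
    using h1 dot lam by (intro mult_left_mono) auto
  have h4: "lam * (2 - lam) * (norm (p - z))\<^sup>2 = 2 * lam * inner (p - z) (p - z) - lam\<^sup>2 * inner (p - z) (p - z)"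
    unfolding power2_norm_eq_inner by (simp add: algebra_simps power2_eq_square)
  show ?thesis unfolding h2 h4 power2_norm_eq_inner using h3
    by (simp add: algebra_simps inner_commute[of z c] inner_commute[of p c] inner_commute[of z p])
qed

lemma two_coords:
  fixes x :: "real^'n::finite"
  assumes "a \<noteq> b"
  shows "(x$a)\<^sup>2 + (x$b)\<^sup>2 \<le> (norm x)\<^sup>2"
proof -
  have "(\<Sum>k\<in>{a,b}. (x$k)\<^sup>2) \<le> (\<Sum>k\<in>UNIV. (x$k)\<^sup>2)"
    by (rule sum_mono2) auto
  also have "\<dots> = (norm x)\<^sup>2"
    unfolding power2_norm_eq_inner by (simp add: inner_vec_def power2_eq_square)
  finally show ?thesis using assms by simp
qed

lemma norm_fst_sq: "(norm (fst u))\<^sup>2 \<le> (norm u)\<^sup>2"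
  by (simp add: norm_prod_def)
lemma norm_snd_sq: "(norm (snd u))\<^sup>2 \<le> (norm u)\<^sup>2"
  by (simp add: norm_prod_def)

lemma diff_sq_le: "((x::real) - y)\<^sup>2 \<le> 2 * (x\<^sup>2 + y\<^sup>2)"
proof -
  have "0 \<le> (x + y)\<^sup>2" by simp
  thus ?thesis by (simp add: power2_eq_square algebra_simps)
qed

lemma gfun_sym: "gfun b a d c = gfun a b c d"
proof -
  have "(b - a) + (d - c) / 2 = - ((a - b) + (c - d) / 2)" by (simp add: field_simps)
  thus ?thesis unfolding gfun_def by (simp only: abs_minus_cancel)
qed

lemma segOx:
  fixes zs z p :: "'n::finite pt"
  assumes ab: "a \<noteq> b" and wp: "w a + w b > 0" and cvx: "convex BB"
    and zs: "zs \<in> Ox w a b" "zs \<in> BB" and p: "p \<in> Ox w b a" "p \<in> BB"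
    and e: "dist z zs < gfun (fst zs $ a) (fst zs $ b) (w a) (w b)"
  shows "\<exists>q'. q' \<in> Ox w a b \<inter> BB \<and> dist z q' < dist z p"
proof -
  define \<phi> where "\<phi> = (\<lambda>u::'n pt. fst u $ b - fst u $ a)"
  have lin: "linear \<phi>" unfolding \<phi>_def by (rule linearI) (simp_all add: algebra_simps)
  have bnd: "(\<phi> u)\<^sup>2 \<le> 2 * (norm u)\<^sup>2" for u
  proof -
    have "(\<phi> u)\<^sup>2 \<le> 2 * ((fst u $ b)\<^sup>2 + (fst u $ a)\<^sup>2)" unfolding \<phi>_def by (rule diff_sq_le)
    also have "\<dots> \<le> 2 * (norm (fst u))\<^sup>2" using two_coords[OF ab, of "fst u"] by simp
    also have "\<dots> \<le> 2 * (norm u)\<^sup>2" using norm_fst_sq[of u] by simp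
    finally show ?thesis .
  qed
  have a1: "w a \<le> \<phi> zs" using zs(1) by (simp add: \<phi>_def Ox_def)
  have a2: "\<phi> p \<le> - w b" using p(1) by (simp add: \<phi>_def Ox_def)
  have a3: "- w b < w a" using wp by simp
  have g: "gfun (fst zs $ a) (fst zs $ b) (w a) (w b) = (\<phi> zs - (w a + - w b) / 2) / sqrt 2"
  proof -
    have "(fst zs $ a - fst zs $ b) + (w a - w b) / 2 < 0" using a1 wp unfolding \<phi>_def by (simp add: field_simps)
    hence "\<bar>(fst zs $ a - fst zs $ b) + (w a - w b) / 2\<bar> = \<phi> zs - (w a + - w b) / 2"
      by (simp add: \<phi>_def)
    thus ?thesis by (simp add: gfun_def)
  qed
  have e': "norm (z - zs) * sqrt 2 < \<phi> zs - (w a + - w b) / 2"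
    using e unfolding g dist_norm by (simp add: field_simps)
  from seg[OF lin bnd cvx zs(2) a1 p(2) a2 a3 e'] obtain q' where
    "q' \<in> BB" "w a \<le> \<phi> q'" "dist z q' < dist z p" by blast
  hence "q' \<in> Ox w a b \<inter> BB" by (simp add: Ox_def \<phi>_def)
  thus ?thesis using \<open>dist z q' < dist z p\<close> by blast
qed

lemma segOy:
  fixes zs z p :: "'n::finite pt"
  assumes ab: "a \<noteq> b" and hp: "h a + h b > 0" and cvx: "convex BB"
    and zs: "zs \<in> Oy h a b" "zs \<in> BB" and p: "p \<in> Oy h b a" "p \<in> BB"
    and e: "dist z zs < gfun (snd zs $ a) (snd zs $ b) (h a) (h b)"
  shows "\<exists>q'. q' \<in> Oy h a b \<inter> BB \<and> dist z q' < dist z p"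
proof -
  define \<phi> where "\<phi> = (\<lambda>u::'n pt. snd u $ b - snd u $ a)"
  have lin: "linear \<phi>" unfolding \<phi>_def by (rule linearI) (simp_all add: algebra_simps)
  have bnd: "(\<phi> u)\<^sup>2 \<le> 2 * (norm u)\<^sup>2" for u
  proof -
    have "(\<phi> u)\<^sup>2 \<le> 2 * ((snd u $ b)\<^sup>2 + (snd u $ a)\<^sup>2)" unfolding \<phi>_def by (rule diff_sq_le)
    also have "\<dots> \<le> 2 * (norm (snd u))\<^sup>2" using two_coords[OF ab, of "snd u"] by simp
    also have "\<dots> \<le> 2 * (norm u)\<^sup>2" using norm_snd_sq[of u] by simp
    finally show ?thesis .
  qed
  have a1: "h a \<le> \<phi> zs" using zs(1) by (simp add: \<phi>_def Oy_def)
  have a2: "\<phi> p \<le> - h b" using p(1) by (simp add: \<phi>_def Oy_def)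
  have a3: "- h b < h a" using hp by simp
  have g: "gfun (snd zs $ a) (snd zs $ b) (h a) (h b) = (\<phi> zs - (h a + - h b) / 2) / sqrt 2"
  proof -
    have "(snd zs $ a - snd zs $ b) + (h a - h b) / 2 < 0" using a1 hp unfolding \<phi>_def by (simp add: field_simps)
    hence "\<bar>(snd zs $ a - snd zs $ b) + (h a - h b) / 2\<bar> = \<phi> zs - (h a + - h b) / 2"
      by (simp add: \<phi>_def)
    thus ?thesis by (simp add: gfun_def)
  qed
  have e': "norm (z - zs) * sqrt 2 < \<phi> zs - (h a + - h b) / 2"
    using e unfolding g dist_norm by (simp add: field_simps)
  from seg[OF lin bnd cvx zs(2) a1 p(2) a2 a3 e'] obtain q' where
    "q' \<in> BB" "h a \<le> \<phi> q'" "dist z q' < dist z p" by blast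
  hence "q' \<in> Oy h a b \<inter> BB" by (simp add: Oy_def \<phi>_def)
  thus ?thesis using \<open>dist z q' < dist z p\<close> by blast
qed



lemma Cfam_props:
  "closed (Cfam W H w h t k)" "convex (Cfam W H w h t k)"
  by (simp_all add: closed_Cfam convex_Cfam)

lemma nearest_closer:
  assumes "p \<in> nearest C z" "q \<in> unionC C"
  shows "dist z p \<le> dist z q"
  using assms infdist_le[of q "unionC C" z] by (simp add: nearest_def)

lemma fix_in_union:
  assumes "zs \<in> FixT lam C" "lam \<noteq> 0"
  shows "zs \<in> unionC C"
proof -
  from assms obtain p0 where p0: "p0 \<in> nearest C zs" "zs = zs + lam *\<^sub>R (p0 - zs)"
    by (auto simp: FixT_def Top_def)
  hence "lam *\<^sub>R (p0 - zs) = 0" by (metis add_cancel_left_right)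
  hence "p0 = zs" using assms(2) by simp
  thus ?thesis using p0 by (simp add: nearest_def)
qed

lemma active_eq:
  assumes zu: "zs \<in> unionC C" and cl: "\<And>k. closed (C k)" and ne: "\<And>k. C k \<noteq> {}"
  shows "active C zs = {k. zs \<in> C k}"
proof (intro set_eqI iffI)
  fix k assume "k \<in> active C zs"
  hence cp: "closest_point (C k) zs \<in> nearest C zs" by (simp add: active_def)
  have "infdist zs (unionC C) = 0" using zu by (simp add: infdist_zero)
  hence "closest_point (C k) zs = zs" using cp by (simp add: nearest_def)
  moreover have "closest_point (C k) zs \<in> C k" by (rule closest_point_in_set[OF cl ne])
  ultimately show "k \<in> {k. zs \<in> C k}" by simp
next
  fix k assume "k \<in> {k. zs \<in> C k}"
  hence "closest_point (C k) zs = zs" by (simp add: closest_point_self)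
  moreover have "zs \<in> nearest C zs" using zu by (simp add: nearest_def infdist_zero)
  ultimately show "k \<in> active C zs" by (simp add: active_def)
qed

lemma keyA:
  fixes z p zstar :: "'n::{finite,linorder} pt"
  assumes t: "t \<in> pairs Rs" and wpos: "\<forall>i\<in>Rs. w i > 0" and hpos: "\<forall>i\<in>Rs. h i > 0"
    and ne: "\<forall>k. Cfam W H w h t k \<noteq> {}" and lam: "0 < lam"
    and fx: "zstar \<in> FixT lam (Cfam W H w h t)"
    and rtt: "rt t = min (d_sep (Cfam W H w h t) zstar) (d_esc (Cfam W H w h t) zstar)
      \<or> (card (active (Cfam W H w h t) zstar) = 1 \<and>
         rt t = min (d_sep (Cfam W H w h t) zstar)
                    ((d_sep (Cfam W H w h t) zstar + d_esc (Cfam W H w h t) zstar) / 2))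
      \<or> (card (active (Cfam W H w h t) zstar) = 2 \<and>
         rt t = min (gfun (fst zstar $ fst t) (fst zstar $ snd t) (w (fst t)) (w (snd t)))
                    (gfun (snd zstar $ fst t) (snd zstar $ snd t) (h (fst t)) (h (snd t))))"
    and er: "\<epsilon> < rt t"
    and z: "dist z zstar < \<epsilon>" and p: "p \<in> nearest (Cfam W H w h t) z"
  shows "\<exists>k. zstar \<in> Cfam W H w h t k \<and> p \<in> Cfam W H w h t k"
proof -
  obtain i j where tij: "t = (i, j)" by (cases t)
  have ij: "i \<in> Rs" "j \<in> Rs" "i < j" using t by (auto simp: pairs_def tij)
  define C where "C = Cfam W H w h t"
  have CL: "C Lft = Ox w i j \<inter> Bij W H w h i j" and CR: "C Rgt = Ox w j i \<inter> Bij W H w h i j"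
    and CB: "C Blw = Oy h i j \<inter> Bij W H w h i j" and CA: "C Abv = Oy h j i \<inter> Bij W H w h i j"
    by (simp_all add: C_def Cfam_def Cpiece_def tij)
  have clC: "closed (C k)" "convex (C k)" "C k \<noteq> {}" for k
    using ne by (simp_all add: C_def closed_Cfam convex_Cfam)
  have cvxB: "convex (Bij W H w h i j)"
    unfolding Bij_def by (intro convex_Int convex_Bx convex_By)
  have zu: "zstar \<in> unionC C" using fix_in_union[of zstar lam C] fx lam by (simp add: C_def)
  have act: "active C zstar = {k. zstar \<in> C k}"
    using active_eq[OF zu] clC by blast
  have pu: "p \<in> unionC C" using p by (simp add: nearest_def C_def)
  have closer: "\<And>q. q \<in> unionC C \<Longrightarrow> dist z p \<le> dist z q"
    using nearest_closer p by (simp add: C_def)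
  from pu obtain m where pm: "p \<in> C m" by (auto simp: unionC_def)
  show ?thesis
  proof (cases "zstar \<in> C m")
    case True thus ?thesis using pm C_def by blast
  next
    case False
    have mna: "m \<notin> active C zstar" using False act by simp
    have "(\<epsilon> < d_sep C zstar \<and> 2 * \<epsilon> < d_sep C zstar + d_esc C zstar) \<or>
          (card (active C zstar) = 2 \<and>
           \<epsilon> < gfun (fst zstar $ i) (fst zstar $ j) (w i) (w j) \<and>
           \<epsilon> < gfun (snd zstar $ i) (snd zstar $ j) (h i) (h j))"
    proof -
      have fi: "fst t = i" "snd t = j" by (simp_all add: tij)
      from rtt consider (c1) "rt t = min (d_sep C zstar) (d_esc C zstar)"
        | (c2) "rt t = min (d_sep C zstar) ((d_sep C zstar + d_esc C zstar) / 2)"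
        | (c3) "card (active C zstar) = 2 \<and> rt t = min (gfun (fst zstar $ i) (fst zstar $ j) (w i) (w j))
                    (gfun (snd zstar $ i) (snd zstar $ j) (h i) (h j))"
        unfolding C_def fi by blast
      thus ?thesis
      proof cases
        case c1
        hence "\<epsilon> < d_sep C zstar" "\<epsilon> < d_esc C zstar" using er by simp_all
        thus ?thesis by linarith
      next
        case c2
        hence "\<epsilon> < d_sep C zstar" "\<epsilon> < (d_sep C zstar + d_esc C zstar) / 2" using er by simp_all
        thus ?thesis by (simp add: field_simps)
      next
        case c3
        thus ?thesis using er by simp
      qed
    qed
    hence False
    proof (elim disjE conjE)
      assume e1: "\<epsilon> < d_sep C zstar" and e2: "2 * \<epsilon> < d_sep C zstar + d_esc C zstar"
      obtain k where zk: "zstar \<in> C k" using zu by (auto simp: unionC_def)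
      have ka: "k \<in> active C zstar" using zk act by simp
      have sep: "d_sep C zstar \<le> infdist zstar (C m)"
        unfolding d_sep_def using mna by (intro Min_le) auto
      have esc: "y \<in> C k" if y: "dist y zstar < d_esc C zstar" for y
      proof (rule ccontr)
        assume "y \<notin> C k"
        hence "norm (y - zstar) \<in> {norm (z - zstar) | z. \<exists>k\<in>active C zstar. z \<notin> C k}"
          using ka by blast
        hence "d_esc C zstar \<le> norm (y - zstar)" unfolding d_esc_def
          by (rule cInf_lower) (intro bdd_belowI[of _ 0], auto)
        thus False using y by (simp add: dist_norm)
      qed
      define r where "r = dist z zstar"
      have r0: "0 \<le> r" by (simp add: r_def)
      have pfar: "d_sep C zstar - r \<le> dist z p"
      proof -
        have "infdist zstar (C m) \<le> dist zstar p" using pm by (rule infdist_le)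
        also have "\<dots> \<le> dist zstar z + dist z p" by (rule dist_triangle)
        finally show ?thesis using sep by (simp add: r_def dist_commute)
      qed
      have "\<exists>q'. q' \<in> C k \<and> dist z q' < d_sep C zstar - r"
      proof (cases "r < d_esc C zstar")
        case True
        hence "z \<in> C k" using esc by (simp add: r_def)
        moreover have "dist z z < d_sep C zstar - r" using z e1 by (simp add: r_def)
        ultimately show ?thesis by blast
      next
        case nesc: False
        show ?thesis
        proof (cases "2 * r < d_sep C zstar")
          case True
          thus ?thesis using zk by (intro exI[of _ zstar]) (simp add: r_def)
        next
          case False
          define u where "u = (2 * r - d_sep C zstar + d_esc C zstar) / 2"
          have rpos: "0 < r" using False e1 z r_def by linarith
          have u1: "2 * r - d_sep C zstar < u" using e2 z unfolding u_def r_def by (simp add: field_simps)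
          have u2: "u < d_esc C zstar" using e2 z unfolding u_def r_def by (simp add: field_simps)
          have u0: "0 \<le> u" using u1 False by linarith
          have ur: "u \<le> r" using u2 nesc by linarith
          define q' where "q' = zstar + (u / r) *\<^sub>R (z - zstar)"
          have nz: "norm (z - zstar) = r" by (simp add: r_def dist_norm)
          have "dist q' zstar = u" using rpos u0
            by (simp add: q'_def dist_norm nz)
          hence qk: "q' \<in> C k" using esc u2 by simp
          have zq: "z - q' = (1 - u / r) *\<^sub>R (z - zstar)"
            by (simp add: q'_def algebra_simps)
          have ur1: "u / r \<le> 1" using rpos ur by simp
          have "dist z q' = \<bar>1 - u / r\<bar> * r" unfolding dist_norm zq by (simp add: nz)
          also have "\<dots> = (1 - u / r) * r" using ur1 by simp
          also have "\<dots> = r - u" using rpos by (simp add: field_simps)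
          finally have "dist z q' = r - u" .
          hence "dist z q' < d_sep C zstar - r" using u1 by linarith
          thus ?thesis using qk by blast
        qed
      qed
      then obtain q' where q': "q' \<in> C k" "dist z q' < d_sep C zstar - r" by blast
      have "q' \<in> unionC C" using q' by (auto simp: unionC_def)
      hence "dist z p \<le> dist z q'" by (rule closer)
      thus False using q' pfar by linarith
    next
      assume c2: "card (active C zstar) = 2"
        and gx: "\<epsilon> < gfun (fst zstar $ i) (fst zstar $ j) (w i) (w j)"
        and gy: "\<epsilon> < gfun (snd zstar $ i) (snd zstar $ j) (h i) (h j)"
      have wi: "w i > 0" "w j > 0" using wpos ij(1,2) by blast+
      have hi: "h i > 0" "h j > 0" using hpos ij(1,2) by blast+
      have wij: "w i + w j > 0" "w j + w i > 0" using wi by simp_all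
      have hij: "h i + h j > 0" "h j + h i > 0" using hi by simp_all
      have ij': "i \<noteq> j" "j \<noteq> i" using ij by auto
      have notLR: "\<not> (zstar \<in> C Lft \<and> zstar \<in> C Rgt)"
        using wij unfolding CL CR by (auto simp: Ox_def)
      have notBA: "\<not> (zstar \<in> C Blw \<and> zstar \<in> C Abv)"
        using hij unfolding CB CA by (auto simp: Oy_def)
      have side_cases: "k = Lft \<or> k = Rgt \<or> k = Blw \<or> k = Abv" for k by (cases k) auto
      have card1: "card (active C zstar) \<le> 1" if "active C zstar \<subseteq> {k0}" for k0
        using card_mono[OF _ that] by simp
      have LR: "zstar \<in> C Lft \<or> zstar \<in> C Rgt"
      proof (rule ccontr)
        assume nn: "\<not> (zstar \<in> C Lft \<or> zstar \<in> C Rgt)"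
        show False
        proof (cases "zstar \<in> C Blw")
          case True
          have "active C zstar \<subseteq> {Blw}" unfolding act
          proof
            fix k assume "k \<in> {k. zstar \<in> C k}"
            thus "k \<in> {Blw}" using nn notBA True by (cases k) auto
          qed
          thus False using card1 c2 by fastforce
        next
          case False
          have "active C zstar \<subseteq> {Abv}" unfolding act
          proof
            fix k assume "k \<in> {k. zstar \<in> C k}"
            thus "k \<in> {Abv}" using nn notBA False by (cases k) auto
          qed
          thus False using card1 c2 by fastforce
        qed
      qed
      have BA: "zstar \<in> C Blw \<or> zstar \<in> C Abv"
      proof (rule ccontr)
        assume nn: "\<not> (zstar \<in> C Blw \<or> zstar \<in> C Abv)"
        show False
        proof (cases "zstar \<in> C Lft")
          case True
          have "active C zstar \<subseteq> {Lft}" unfolding act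
          proof
            fix k assume "k \<in> {k. zstar \<in> C k}"
            thus "k \<in> {Lft}" using nn notLR True by (cases k) auto
          qed
          thus False using card1 c2 by fastforce
        next
          case False
          have "active C zstar \<subseteq> {Rgt}" unfolding act
          proof
            fix k assume "k \<in> {k. zstar \<in> C k}"
            thus "k \<in> {Rgt}" using nn notLR False by (cases k) auto
          qed
          thus False using card1 c2 by fastforce
        qed
      qed
      have dz: "dist z zstar < gfun (fst zstar $ i) (fst zstar $ j) (w i) (w j)"
        "dist z zstar < gfun (fst zstar $ j) (fst zstar $ i) (w j) (w i)"
        "dist z zstar < gfun (snd zstar $ i) (snd zstar $ j) (h i) (h j)"
        "dist z zstar < gfun (snd zstar $ j) (snd zstar $ i) (h j) (h i)"
        using z gx gy by (simp_all add: gfun_sym)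
      have "\<exists>k'. \<exists>q'. q' \<in> C k' \<and> dist z q' < dist z p"
      proof -
        consider "m = Lft" | "m = Rgt" | "m = Blw" | "m = Abv" using side_cases by blast
        thus ?thesis
        proof cases
          case 1
          hence zO: "zstar \<in> C Rgt" using LR False by auto
          have pM: "p \<in> C Lft" using pm 1 by simp
          obtain q' where q': "q' \<in> Ox w j i \<inter> Bij W H w h i j" "dist z q' < dist z p"
            using segOx[OF ij'(2) wij(2) cvxB _ _ _ _ dz(2)] zO pM unfolding CL CR by blast
          have "q' \<in> C Rgt" using q'(1) CR by simp
          thus ?thesis using q'(2) by blast
        next
          case 2
          hence zO: "zstar \<in> C Lft" using LR False by auto
          have pM: "p \<in> C Rgt" using pm 2 by simp
          obtain q' where q': "q' \<in> Ox w i j \<inter> Bij W H w h i j" "dist z q' < dist z p"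
            using segOx[OF ij'(1) wij(1) cvxB _ _ _ _ dz(1)] zO pM unfolding CR CL by blast
          have "q' \<in> C Lft" using q'(1) CL by simp
          thus ?thesis using q'(2) by blast
        next
          case 3
          hence zO: "zstar \<in> C Abv" using BA False by auto
          have pM: "p \<in> C Blw" using pm 3 by simp
          obtain q' where q': "q' \<in> Oy h j i \<inter> Bij W H w h i j" "dist z q' < dist z p"
            using segOy[OF ij'(2) hij(2) cvxB _ _ _ _ dz(4)] zO pM unfolding CB CA by blast
          have "q' \<in> C Abv" using q'(1) CA by simp
          thus ?thesis using q'(2) by blast
        next
          case 4
          hence zO: "zstar \<in> C Blw" using BA False by auto
          have pM: "p \<in> C Abv" using pm 4 by simp
          obtain q' where q': "q' \<in> Oy h i j \<inter> Bij W H w h i j" "dist z q' < dist z p"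
            using segOy[OF ij'(1) hij(1) cvxB _ _ _ _ dz(3)] zO pM unfolding CA CB by blast
          have "q' \<in> C Blw" using q'(1) CB by simp
          thus ?thesis using q'(2) by blast
        qed
      qed
      then obtain k' q' where q': "q' \<in> C k'" "dist z q' < dist z p" by blast
      have "q' \<in> unionC C" using q' by (auto simp: unionC_def)
      hence "dist z p \<le> dist z q'" by (rule closer)
      thus False using q' by linarith
    qed
    thus ?thesis ..
  qed
qed



lemma fejer:
  fixes z p c :: "'a::{real_inner,heine_borel}"
  assumes p: "p \<in> nearest C z" and pk: "p \<in> C k" and ck: "c \<in> C k"
    and cvx: "convex (C k)" and cl: "closed (C k)" and lam: "0 \<le> lam"
  shows "(norm (z + lam *\<^sub>R (p - z) - c))\<^sup>2 \<le> (norm (z - c))\<^sup>2 - lam * (2 - lam) * (norm (p - z))\<^sup>2"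
proof -
  have "\<forall>y\<in>C k. dist z p \<le> dist z y"
    using nearest_closer[OF p] by (auto simp: unionC_def)
  from any_closest_point_dot[OF cvx cl pk ck this]
  show ?thesis by (rule relax_step[OF _ lam])
qed

theorem mainTheorem3:
  fixes W H lam \<epsilon> :: real
    and w h :: "'n::{finite,linorder} \<Rightarrow> real"
    and Rs :: "'n set"
    and zstar :: "'n pt"
    and rt :: "'n \<times> 'n \<Rightarrow> real"
    and zs :: "nat \<Rightarrow> 'n pt"
    and ts :: "nat \<Rightarrow> 'n \<times> 'n"
    and n0 :: nat
  assumes W: "W > 0" and H: "H > 0"
    and Rs: "card Rs \<ge> 2"
    and wpos: "\<forall>i\<in>Rs. w i > 0" and hpos: "\<forall>i\<in>Rs. h i > 0"
    and nonempty: "\<forall>t\<in>pairs Rs. \<forall>k. Cfam W H w h t k \<noteq> {}"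
    and lam: "0 < lam" "lam < 2"
    and fixpt: "\<forall>t\<in>pairs Rs. zstar \<in> FixT lam (Cfam W H w h t)"
    and rt: "\<forall>t\<in>pairs Rs.
        rt t = min (d_sep (Cfam W H w h t) zstar) (d_esc (Cfam W H w h t) zstar)
      \<or> (card (active (Cfam W H w h t) zstar) = 1 \<and>
         rt t = min (d_sep (Cfam W H w h t) zstar)
                    ((d_sep (Cfam W H w h t) zstar + d_esc (Cfam W H w h t) zstar) / 2))
      \<or> (card (active (Cfam W H w h t) zstar) = 2 \<and>
         rt t = min (gfun (fst zstar $ fst t) (fst zstar $ snd t) (w (fst t)) (w (snd t)))
                    (gfun (snd zstar $ fst t) (snd zstar $ snd t) (h (fst t)) (h (snd t))))"
    and rpos: "Min (rt ` pairs Rs) > 0"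
    and eps: "0 < \<epsilon>" "\<epsilon> < Min (rt ` pairs Rs)"
    and ts_range: "\<forall>n. ts n \<in> pairs Rs"
    and sweeps: "\<forall>k. ts ` {k * card (pairs Rs) + 1 .. (k + 1) * card (pairs Rs)} = pairs Rs"
    and traj: "\<forall>n. zs (Suc n) \<in> Top lam (Cfam W H w h (ts n)) (zs n)"
    and start: "zs n0 \<in> ball zstar \<epsilon>"
  shows "(\<forall>n\<ge>n0. zs n \<in> ball zstar \<epsilon>) \<and>
         (\<exists>z'. (\<forall>t\<in>pairs Rs. z' \<in> FixT lam (Cfam W H w h t)) \<and> zs \<longlonglongrightarrow> z')"
proof -
  define C where "C = Cfam W H w h"
  have finP: "finite (pairs Rs)" by simp
  have rtpos: "\<epsilon> < rt t" if "t \<in> pairs Rs" for t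
  proof -
    have "Min (rt ` pairs Rs) \<le> rt t" using finP that by (intro Min_le) auto
    thus ?thesis using eps by linarith
  qed
  have clC: "closed (C t k)" "convex (C t k)" for t k
    by (simp_all add: C_def closed_Cfam convex_Cfam)
  have step: "\<exists>p. p \<in> nearest (C (ts n)) (zs n) \<and> zs (Suc n) = zs n + lam *\<^sub>R (p - zs n)" for n
  proof -
    have "zs (Suc n) \<in> Top lam (C (ts n)) (zs n)" using traj by (simp add: C_def)
    thus ?thesis unfolding Top_def by blast
  qed
  have keyn: "\<exists>k. zstar \<in> C (ts n) k \<and> p \<in> C (ts n) k"
    if "dist z zstar < \<epsilon>" "p \<in> nearest (C (ts n)) z" for n z p
  proof -
    have tp: "ts n \<in> pairs Rs" using ts_range by blast
    have a: "\<forall>k. Cfam W H w h (ts n) k \<noteq> {}" using nonempty tp by blast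
    have b: "zstar \<in> FixT lam (Cfam W H w h (ts n))" using fixpt tp by blast
    have pp: "p \<in> nearest (Cfam W H w h (ts n)) z" using that(2) by (simp add: C_def)
    show ?thesis unfolding C_def
      by (rule keyA[where t="ts n" and rt=rt and zstar=zstar and z=z and p=p and \<epsilon>=\<epsilon>, OF tp wpos hpos a lam(1) b rt[rule_format, OF tp] rtpos[OF tp] that(1) pp])
  qed
  define \<kappa> where "\<kappa> = (2 - lam) / lam"
  have kpos: "\<kappa> > 0" using lam by (simp add: \<kappa>_def)
  have stepsz: "dist (zs (Suc n)) (zs n) = lam * dist (zs n) p"
    if "zs (Suc n) = zs n + lam *\<^sub>R (p - zs n)" for n p
    using that lam by (simp add: dist_norm dist_commute norm_minus_commute)
  have dec: "(dist (zs (Suc n)) zstar)\<^sup>2 + \<kappa> * (dist (zs (Suc n)) (zs n))\<^sup>2 \<le> (dist (zs n) zstar)\<^sup>2"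
    if hn: "dist (zs n) zstar < \<epsilon>" for n
  proof -
    obtain p where p: "p \<in> nearest (C (ts n)) (zs n)" "zs (Suc n) = zs n + lam *\<^sub>R (p - zs n)"
      using step by blast
    obtain k where k: "zstar \<in> C (ts n) k" "p \<in> C (ts n) k" using keyn[OF hn p(1)] by blast
    have f: "(norm (zs (Suc n) - zstar))\<^sup>2 \<le> (norm (zs n - zstar))\<^sup>2 - lam * (2 - lam) * (norm (p - zs n))\<^sup>2"
      unfolding p(2) by (rule fejer[OF p(1) k(2) k(1) clC(2) clC(1)]) (use lam in simp)
    have "\<kappa> * (dist (zs (Suc n)) (zs n))\<^sup>2 = lam * (2 - lam) * (norm (p - zs n))\<^sup>2"
      unfolding stepsz[OF p(2)] \<kappa>_def using lam
      by (simp add: power2_eq_square dist_norm norm_minus_commute field_simps)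
    thus ?thesis using f by (simp add: dist_norm)
  qed
  have dec1: "dist (zs (Suc n)) zstar \<le> dist (zs n) zstar" if "dist (zs n) zstar < \<epsilon>" for n
  proof -
    have "(dist (zs (Suc n)) zstar)\<^sup>2 \<le> (dist (zs n) zstar)\<^sup>2"
      using dec[OF that] kpos by (smt (verit) mult_nonneg_nonneg zero_le_power2)
    thus ?thesis by (rule power2_le_imp_le) simp
  qed
  have st: "dist (zs n0) zstar < \<epsilon>" using start by (simp add: dist_commute)
  have inball0: "dist (zs (n0 + n)) zstar \<le> dist (zs n0) zstar" for n
  proof (induction n)
    case 0 show ?case by simp
  next
    case (Suc n)
    have "dist (zs (n0 + n)) zstar < \<epsilon>" using Suc st by linarith
    from dec1[OF this] Suc show ?case by simp
  qed
  have inb: "dist (zs n) zstar < \<epsilon>" if "n \<ge> n0" for n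
    using inball0[of "n - n0"] st that by simp
  have part1: "\<forall>n\<ge>n0. zs n \<in> ball zstar \<epsilon>"
    using inb by (simp add: dist_commute)
  define e where "e n = (dist (zs (n0 + n)) zstar)\<^sup>2" for n
  have edec: "e (Suc n) + \<kappa> * (dist (zs (Suc (n0 + n))) (zs (n0 + n)))\<^sup>2 \<le> e n" for n
    using dec[OF inb[of "n0 + n"]] by (simp add: e_def)
  have "antimono e"
  proof (rule decseq_SucI)
    fix n show "e (Suc n) \<le> e n" using edec[of n] kpos by (smt (verit) mult_nonneg_nonneg zero_le_power2)
  qed
  moreover have "\<forall>i. 0 \<le> e i" by (simp add: e_def)
  ultimately obtain L where eL: "e \<longlonglongrightarrow> L" by (rule decseq_convergent)
  have ed: "(\<lambda>n. e n - e (Suc n)) \<longlonglongrightarrow> 0"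
    using tendsto_diff[OF eL LIMSEQ_Suc[OF eL]] by simp
  have small: "\<exists>N. \<forall>n\<ge>N. dist (zs (Suc n)) (zs n) < \<eta>" if "\<eta> > 0" for \<eta>
  proof -
    have "\<kappa> * \<eta>\<^sup>2 > 0" using kpos that by simp
    then obtain N0 where N0: "\<forall>n\<ge>N0. norm (e n - e (Suc n) - 0) < \<kappa> * \<eta>\<^sup>2"
      using ed unfolding LIMSEQ_iff by blast
    have "dist (zs (Suc n)) (zs n) < \<eta>" if "n \<ge> n0 + N0" for n
    proof -
      define m where "m = n - n0"
      have nm: "n = n0 + m" "m \<ge> N0" using that by (auto simp: m_def)
      have "\<kappa> * (dist (zs (Suc n)) (zs n))\<^sup>2 < \<kappa> * \<eta>\<^sup>2"
        using edec[of m] N0[rule_format, OF nm(2)] nm(1) by simp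
      hence "(dist (zs (Suc n)) (zs n))\<^sup>2 < \<eta>\<^sup>2" using kpos by simp
      thus ?thesis by (rule power2_less_imp_less) (use \<open>\<eta> > 0\<close> in simp)
    qed
    thus ?thesis by blast
  qed
  have inc: "\<forall>n. zs (n0 + n) \<in> cball zstar \<epsilon>"
  proof
    fix n
    have "dist (zs (n0 + n)) zstar \<le> \<epsilon>" using inball0[of n] st by linarith
    thus "zs (n0 + n) \<in> cball zstar \<epsilon>" by (simp add: dist_commute)
  qed
  have cc: "\<forall>f. (\<forall>n. f n \<in> cball zstar \<epsilon>) \<longrightarrow> (\<exists>l\<in>cball zstar \<epsilon>. \<exists>r::nat\<Rightarrow>nat. strict_mono r \<and> (f \<circ> r) \<longlonglongrightarrow> l)"
    using compact_cball[of zstar \<epsilon>] unfolding compact_def .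
  obtain zb r where zb: "zb \<in> cball zstar \<epsilon>" and r: "strict_mono r"
    and zbl: "((\<lambda>n. zs (n0 + n)) \<circ> r) \<longlonglongrightarrow> zb"
    using cc[rule_format, of "\<lambda>n. zs (n0 + n)"] inc by blast
  have subc: "\<exists>J. \<forall>j\<ge>J. dist (zs (n0 + r j)) zb < \<eta>" if "\<eta> > 0" for \<eta>
    using zbl that unfolding LIMSEQ_iff by (auto simp: dist_norm)
  define S where "S = {(t, k). t \<in> pairs Rs \<and> zb \<notin> C t k}"
  define \<delta> where "\<delta> = Min (insert 1 ((\<lambda>(t, k). infdist zb (C t k)) ` S))"
  have finS: "finite S" by simp
  have Sne: "C t k \<noteq> {}" if "t \<in> pairs Rs" for t k using nonempty that by (simp add: C_def)
  have dpos: "\<delta> > 0"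
    unfolding \<delta>_def
  proof (subst Min_gr_iff)
    show "finite (insert 1 ((\<lambda>(t, k). infdist zb (C t k)) ` S))" using finS by simp
    show "insert 1 ((\<lambda>(t, k). infdist zb (C t k)) ` S) \<noteq> {}" by simp
    show "\<forall>a\<in>insert 1 ((\<lambda>(t, k). infdist zb (C t k)) ` S). 0 < a"
    proof
      fix a assume "a \<in> insert 1 ((\<lambda>(t, k). infdist zb (C t k)) ` S)"
      then consider "a = 1" | t k where "t \<in> pairs Rs" "zb \<notin> C t k" "a = infdist zb (C t k)"
        by (auto simp: S_def)
      thus "0 < a"
      proof cases
        case 1 thus ?thesis by simp
      next
        case 2
        have "infdist zb (C t k) \<noteq> 0"
          using in_closed_iff_infdist_zero[OF clC(1) Sne[OF 2(1)]] 2(2) by blast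
        thus ?thesis using infdist_nonneg[of zb "C t k"] 2(3) by linarith
      qed
    qed
  qed
  have dle: "\<delta> \<le> infdist zb (C t k)" if "t \<in> pairs Rs" "zb \<notin> C t k" for t k
    unfolding \<delta>_def using finS that by (intro Min_le) (auto simp: S_def)
  have loc: "dist (zs (Suc a)) zb \<le> dist (zs a) zb"
    if a1: "dist (zs (Suc a)) (zs a) < lam * \<delta> / 3" and a2: "dist (zs a) zb < \<delta> / 3" for a
  proof -
    obtain p where p: "p \<in> nearest (C (ts a)) (zs a)" "zs (Suc a) = zs a + lam *\<^sub>R (p - zs a)"
      using step by blast
    have "lam * dist (zs a) p < lam * (\<delta> / 3)" using a1 stepsz[OF p(2)] by simp
    hence dp: "dist (zs a) p < \<delta> / 3" using lam by simp
    have "p \<in> unionC (C (ts a))" using p(1) by (simp add: nearest_def)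
    then obtain k where pk: "p \<in> C (ts a) k" by (auto simp: unionC_def)
    have "dist zb p \<le> dist zb (zs a) + dist (zs a) p" by (rule dist_triangle)
    moreover have "dist zb (zs a) < \<delta> / 3" using a2 by (simp add: dist_commute)
    ultimately have dzp: "dist zb p < \<delta>" using dp dpos by linarith
    have zbk: "zb \<in> C (ts a) k"
    proof (rule ccontr)
      assume "zb \<notin> C (ts a) k"
      hence "\<delta> \<le> infdist zb (C (ts a) k)" using dle ts_range by blast
      also have "\<dots> \<le> dist zb p" using pk by (rule infdist_le)
      finally show False using dzp by simp
    qed
    have f: "(norm (zs (Suc a) - zb))\<^sup>2 \<le> (norm (zs a - zb))\<^sup>2 - lam * (2 - lam) * (norm (p - zs a))\<^sup>2"
      unfolding p(2) by (rule fejer[OF p(1) pk zbk clC(2) clC(1)]) (use lam in simp)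
    have "0 \<le> lam * (2 - lam) * (norm (p - zs a))\<^sup>2" using lam by simp
    hence "(norm (zs (Suc a) - zb))\<^sup>2 \<le> (norm (zs a - zb))\<^sup>2" using f by linarith
    hence "norm (zs (Suc a) - zb) \<le> norm (zs a - zb)" by (rule power2_le_imp_le) simp
    thus ?thesis by (simp add: dist_norm)
  qed
  have ld3: "lam * \<delta> / 3 > 0" using lam dpos by simp
  obtain N1 where N1: "\<forall>n\<ge>N1. dist (zs (Suc n)) (zs n) < lam * \<delta> / 3" using small[OF ld3] by blast
  obtain J1 where J1: "\<forall>j\<ge>J1. dist (zs (n0 + r j)) zb < \<delta> / 3" using subc dpos by (meson zero_less_divide_iff zero_less_numeral)
  define j1 where "j1 = max J1 N1"
  define m where "m = n0 + r j1"
  have mN1: "m \<ge> N1" using seq_suble[OF r, of j1] by (simp add: m_def j1_def)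
  have md: "dist (zs m) zb < \<delta> / 3" using J1 by (simp add: m_def j1_def)
  have mono1: "dist (zs (m + k)) zb \<le> dist (zs m) zb" for k
  proof (induction k)
    case 0 show ?case by simp
  next
    case (Suc k)
    have "dist (zs (Suc (m + k))) zb \<le> dist (zs (m + k)) zb"
      using loc N1 mN1 Suc md by simp
    thus ?case using Suc by simp
  qed
  have mono2: "dist (zs (a + k)) zb \<le> dist (zs a) zb" if "a \<ge> m" for a k
  proof (induction k)
    case 0 show ?case by simp
  next
    case (Suc k)
    have am: "a + k = m + (a + k - m)" using that by simp
    have "dist (zs (a + k)) zb < \<delta> / 3" using mono1[of "a + k - m"] md am by simp
    hence "dist (zs (Suc (a + k))) zb \<le> dist (zs (a + k)) zb"
      using loc N1 mN1 that by simp
    thus ?case using Suc by simp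
  qed
  have conv: "zs \<longlonglongrightarrow> zb"
    unfolding LIMSEQ_iff
  proof (intro allI impI)
    fix \<eta> :: real assume "\<eta> > 0"
    then obtain J2 where J2: "\<forall>j\<ge>J2. dist (zs (n0 + r j)) zb < \<eta>" using subc by blast
    define a where "a = n0 + r (max J2 j1)"
    have am: "a \<ge> m" using strict_mono_less_eq[OF r, of j1 "max J2 j1"] by (simp add: a_def m_def)
    have ad: "dist (zs a) zb < \<eta>" using J2 by (simp add: a_def)
    have "norm (zs n - zb) < \<eta>" if "n \<ge> a" for n
      using mono2[OF am, of "n - a"] ad that by (simp add: dist_norm)
    thus "\<exists>no. \<forall>n\<ge>no. norm (zs n - zb) < \<eta>" by blast
  qed
  have Mpos: "card (pairs Rs) \<ge> 1"
    using ts_range finP by (metis One_nat_def Suc_leI card_gt_0_iff empty_iff)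
  have often: "\<exists>n\<ge>N. ts n = t" if "t \<in> pairs Rs" for t N
  proof -
    have "t \<in> ts ` {N * card (pairs Rs) + 1 .. (N + 1) * card (pairs Rs)}"
      using sweeps that by simp
    then obtain n where n: "n \<ge> N * card (pairs Rs) + 1" "ts n = t" by auto
    have "N \<le> N * card (pairs Rs)" using Mpos by simp
    hence "N \<le> n" using n(1) by linarith
    thus ?thesis using n(2) by blast
  qed
  have fixb: "zb \<in> FixT lam (C t)" if tp: "t \<in> pairs Rs" for t
  proof -
    define U where "U = unionC (C t)"
    have clU: "closed U" by (simp add: U_def C_def closed_unionC)
    have neU: "U \<noteq> {}" using Sne[OF tp, of Lft] by (auto simp: U_def unionC_def)
    have "infdist zb U = 0"
    proof (rule ccontr)
      assume "infdist zb U \<noteq> 0"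
      hence d0: "infdist zb U > 0" using infdist_nonneg[of zb U] by linarith
      define d where "d = infdist zb U"
      have d3: "d / 3 > 0" "lam * d / 3 > 0" using d0 lam by (simp_all add: d_def)
      obtain N2 where N2: "\<forall>n\<ge>N2. norm (zs n - zb) < d / 3"
        using conv d3(1) unfolding LIMSEQ_iff by blast
      obtain N3 where N3: "\<forall>n\<ge>N3. dist (zs (Suc n)) (zs n) < lam * d / 3"
        using small[OF d3(2)] by blast
      obtain n where n: "n \<ge> max N2 N3" "ts n = t" using often[OF tp] by blast
      obtain p where p: "p \<in> nearest (C (ts n)) (zs n)" "zs (Suc n) = zs n + lam *\<^sub>R (p - zs n)"
        using step by blast
      have "dist (zs (Suc n)) (zs n) < lam * d / 3" using N3 n(1) by simp
      hence "lam * dist (zs n) p < lam * (d / 3)" using stepsz[OF p(2)] by simp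
      hence dp: "dist (zs n) p < d / 3" using lam by simp
      have "infdist (zs n) U = dist (zs n) p" using p(1) n(2) by (simp add: nearest_def U_def)
      moreover have "infdist zb U \<le> infdist (zs n) U + dist zb (zs n)" by (rule infdist_triangle)
      moreover have "dist zb (zs n) < d / 3" using N2 n(1) by (simp add: dist_norm norm_minus_commute)
      ultimately have "d < d / 3 + d / 3" using dp by (simp add: d_def)
      thus False using d3 by simp
    qed
    hence zbU: "zb \<in> U" using in_closed_iff_infdist_zero[OF clU neU] by simp
    hence "zb \<in> nearest (C t) zb" by (simp add: nearest_def U_def infdist_zero)
    hence "zb \<in> Top lam (C t) zb" unfolding Top_def
      by (intro CollectI exI[of _ zb]) simp
    thus ?thesis unfolding FixT_def by simp
  qed
  have "\<forall>t\<in>pairs Rs. zb \<in> FixT lam (Cfam W H w h t)" using fixb by (simp add: C_def)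
  thus ?thesis using part1 conv by blast
qed


end
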